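(* Let $h,k$ be integers with $hk(h+k)\neq0$. Then for every integer $n$ with $n(n+h)(n-k)\neq 0$, $$d(n)\,d(n+h)\,d(n-k)\ \le\ d(h)\,d(k)\,d(h+k)\,d\big(n(n+h)(n-k)\big).$$
   Context: For a nonzero integer $m$, $d(m)$ denotes the number of positive divisors of $m$ (so $d(m)=d(|m|)$). *)

theory Defs
  imports Main
begin

definition ndiv :: "int \<Rightarrow> nat" where
  "ndiv m = card {q :: int. q > 0 \<and> q dvd m}"

end

theory Submission
  imports Defs
begin

definition Dv :: "int \<Rightarrow> int set" where "Dv m = {q. q > 0 \<and> q dvd m}"

lemma ndiv_Dv: "ndiv m = card (Dv m)" by (simp add: ndiv_def Dv_def)

lemma fin_Dv: "m \<noteq> 0 \<Longrightarrow> finite (Dv m)"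
proof -
  assume m: "m \<noteq> 0"
  have "Dv m \<subseteq> {1..\<bar>m\<bar>}"
    using m by (auto simp: Dv_def dest: dvd_imp_le_int)
  thus ?thesis using finite_subset by blast
qed

lemma ndiv_mono: "m \<noteq> 0 \<Longrightarrow> x dvd m \<Longrightarrow> ndiv x \<le> ndiv m"
  unfolding ndiv_Dv
  by (rule card_mono[OF fin_Dv]) (auto simp: Dv_def intro: dvd_trans)

lemma ndiv_mult: assumes "x \<noteq> 0" "y \<noteq> 0" shows "ndiv (x*y) \<le> ndiv x * ndiv y"
proof -
  have "Dv (x*y) \<subseteq> (\<lambda>(u,v). u*v) ` (Dv x \<times> Dv y)"
  proof
    fix q assume "q \<in> Dv (x*y)"
    hence q: "q > 0" "q dvd x*y" by (auto simp: Dv_def)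
    then obtain u v where uv: "q = u*v" "u dvd x" "v dvd y" using division_decomp by blast
    have "q = \<bar>u\<bar> * \<bar>v\<bar>" using q uv by (metis abs_mult abs_of_pos)
    moreover have "\<bar>u\<bar> \<in> Dv x" "\<bar>v\<bar> \<in> Dv y" using uv q by (auto simp: Dv_def)
    ultimately show "q \<in> (\<lambda>(u,v). u*v) ` (Dv x \<times> Dv y)" by force
  qed
  hence "card (Dv (x*y)) \<le> card ((\<lambda>(u,v). u*v) ` (Dv x \<times> Dv y))"
    using assms by (intro card_mono finite_imageI finite_cartesian_product fin_Dv) auto
  also have "\<dots> \<le> card (Dv x \<times> Dv y)" by (rule card_image_le) (use assms fin_Dv in auto)
  finally show ?thesis by (simp add: ndiv_Dv card_cartesian_product)
qed

lemma ndiv_pair: assumes a: "a \<noteq> 0" and b: "b \<noteq> 0"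
  shows "ndiv a * ndiv b \<le> ndiv (gcd a b) * ndiv (a*b)"
proof -
  define f where "f = (\<lambda>(u::int,v::int). (gcd u (b div v), u*v))"
  have key: "gcd (u*v) b = v * gcd u (b div v)" if "v > 0" "v dvd b" for u v
  proof -
    have "b = (b div v) * v" using that by simp
    hence "gcd (u*v) b = gcd (u*v) ((b div v) * v)" by simp
    also have "\<dots> = \<bar>v\<bar> * gcd u (b div v)"
      using gcd_mult_distrib_int[of v u "b div v"] by (simp add: mult.commute)
    finally show ?thesis using that by simp
  qed
  have inj: "inj_on f (Dv a \<times> Dv b)"
  proof (rule inj_onI)
    fix x y assume A0: "x \<in> Dv a \<times> Dv b" "y \<in> Dv a \<times> Dv b" and E0: "f x = f y"
    obtain u v u' v' where xy: "x = (u,v)" "y = (u',v')" by (cases x, cases y) auto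
    have A: "(u,v) \<in> Dv a \<times> Dv b" "(u',v') \<in> Dv a \<times> Dv b" and
      E: "f (u,v) = f (u',v')" using A0 E0 xy by auto
    have g: "gcd u (b div v) = gcd u' (b div v')" and P: "u*v = u'*v'" using E by (auto simp: f_def)
    have pos: "u > 0" "v > 0" "u' > 0" "v' > 0" "v dvd b" "v' dvd b" using A by (auto simp: Dv_def)
    have "v * gcd u (b div v) = v' * gcd u (b div v)"
      using key[of v u] key[of v' u'] pos P g by simp
    moreover have "gcd u (b div v) \<noteq> 0" using pos by simp
    ultimately have "v = v'" using pos(1) by simp
    thus "x = y" using P pos xy by simp
  qed
  have img: "f ` (Dv a \<times> Dv b) \<subseteq> Dv (gcd a b) \<times> Dv (a*b)"
  proof (rule image_subsetI)
    fix x assume x0: "x \<in> Dv a \<times> Dv b"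
    obtain u v where xuv: "x = (u,v)" by (cases x) auto
    hence "u \<in> Dv a" "v \<in> Dv b" using x0 by auto
    hence pos: "u > 0" "v > 0" "u dvd a" "v dvd b" by (auto simp: Dv_def)
    have "gcd u (b div v) dvd b" using pos
      by (metis dvd_div_mult_self dvd_mult2 gcd_dvd2)
    hence "gcd u (b div v) dvd gcd a b" using pos by (meson dvd_trans gcd_dvd1 gcd_greatest)
    moreover have "gcd u (b div v) > 0" using pos by simp
    moreover have "u*v dvd a*b" using pos by (simp add: mult_dvd_mono)
    moreover have "u*v > 0" using pos by simp
    ultimately show "f x \<in> Dv (gcd a b) \<times> Dv (a*b)" by (simp add: f_def Dv_def xuv)
  qed
  have "card (Dv a \<times> Dv b) = card (f ` (Dv a \<times> Dv b))" using card_image[OF inj] by simp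
  also have "\<dots> \<le> card (Dv (gcd a b) \<times> Dv (a*b))"
    using a b by (intro card_mono[OF _ img] finite_cartesian_product fin_Dv) auto
  finally show ?thesis by (simp add: ndiv_Dv card_cartesian_product)
qed

lemma gcd_prod_dvd: fixes a b c :: int shows "gcd (a*b) c dvd gcd a c * gcd b c"
proof -
  obtain u v where uv: "gcd (a*b) c = u*v" "u dvd a" "v dvd b"
    using division_decomp[of "gcd (a*b) c" a b] by auto
  have "u*v dvd c" using uv(1) by (metis gcd_dvd2)
  hence "u dvd c" "v dvd c" by (auto intro: dvd_mult_left dvd_mult_right)
  hence "u dvd gcd a c" "v dvd gcd b c" using uv by auto
  thus ?thesis using uv(1) by (simp add: mult_dvd_mono)
qed

theorem lemma2p5:
  fixes h k n :: int
  assumes "h * k * (h + k) \<noteq> 0"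
    and "n * (n + h) * (n - k) \<noteq> 0"
  shows "ndiv n * ndiv (n + h) * ndiv (n - k)
         \<le> ndiv h * ndiv k * ndiv (h + k) * ndiv (n * (n + h) * (n - k))"
proof -
  define a b c where "a = n" "b = n + h" "c = n - k"
  have nz: "a \<noteq> 0" "b \<noteq> 0" "c \<noteq> 0" "h \<noteq> 0" "k \<noteq> 0" "h + k \<noteq> 0"
    using assms by (auto simp: a_b_c_def)
  have ab: "a*b \<noteq> 0" using nz by simp
  have s1: "ndiv a * ndiv b * ndiv c \<le> ndiv (gcd a b) * ndiv (a*b) * ndiv c"
    using ndiv_pair[OF nz(1,2)] by simp
  have p2: "ndiv (a*b) * ndiv c \<le> ndiv (gcd (a*b) c) * ndiv (a*b*c)"
    using ndiv_pair[OF ab nz(3)] by simp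
  have gnz: "gcd a c \<noteq> 0" "gcd b c \<noteq> 0" using nz by auto
  have p3: "ndiv (gcd (a*b) c) \<le> ndiv (gcd a c) * ndiv (gcd b c)"
    using ndiv_mono[OF _ gcd_prod_dvd[of a b c]] ndiv_mult[OF gnz] gnz
    by (meson le_trans mult_eq_0_iff)
  have d1: "gcd a b dvd h" using dvd_diff[OF gcd_dvd2[of a b] gcd_dvd1[of a b]]
    by (simp add: a_b_c_def)
  have d2: "gcd a c dvd k" using dvd_diff[OF gcd_dvd1[of a c] gcd_dvd2[of a c]]
    by (simp add: a_b_c_def)
  have d3: "gcd b c dvd h + k" using dvd_diff[OF gcd_dvd1[of b c] gcd_dvd2[of b c]]
    by (simp add: a_b_c_def algebra_simps)
  have m1: "ndiv (gcd a b) \<le> ndiv h" using ndiv_mono[OF nz(4) d1] .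
  have m2: "ndiv (gcd a c) \<le> ndiv k" using ndiv_mono[OF nz(5) d2] .
  have m3: "ndiv (gcd b c) \<le> ndiv (h+k)" using ndiv_mono[OF nz(6) d3] .
  have "ndiv a * ndiv b * ndiv c \<le> ndiv (gcd a b) * (ndiv (gcd (a*b) c) * ndiv (a*b*c))"
    using s1 p2 by (metis mult.assoc mult_le_mono2 le_trans)
  also have "\<dots> \<le> ndiv h * ((ndiv k * ndiv (h+k)) * ndiv (a*b*c))"
    using m1 m2 m3 p3 by (intro mult_le_mono mult_le_mono1) (auto intro: le_trans mult_le_mono)
  finally show ?thesis by (simp add: a_b_c_def mult.assoc)
qed

end
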